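(* Let $w$ be a word of length $k$ over an alphabet with $q \ge 2$ letters. Then $H_w(n) \ge (q-1)\, h_w(n-k-1)$ for all $n > k+1$.
   Context: Let $\Omega$ be a finite alphabet with $q\ge2$ letters; $w = w_k\dots w_1$ a word of length $k$. For an integer $n$, $h_w(n)$ is the number of strings of length $n$ over $\Omega$ whose last $k$ characters form $w$ and which contain $w$ as a block of $k$ consecutive characters nowhere else ($h_w(n) = 0$ for $n < k$, $h_w(k)=1$). $H_w(n) = q\,h_w(n-1) - h_w(n)$; for $n > k$ this equals the number of strings of length $n$ that begin with $w$, end with $w$, and contain $w$ as a block of $k$ consecutive characters nowhere else (and $H_w(k) = -1$, $H_w(n)=0$ for $n<k$). *)

theory Defs
  imports Main
begin

definition occurs_at :: "'a list \<Rightarrow> 'a list \<Rightarrow> nat \<Rightarrow> bool" where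
  "occurs_at w s i \<longleftrightarrow> i + length w \<le> length s \<and> take (length w) (drop i s) = w"

definition h_w :: "'a set \<Rightarrow> 'a list \<Rightarrow> nat \<Rightarrow> nat" where
  "h_w \<Omega> w n = card {s. s \<in> lists \<Omega> \<and> length s = n \<and> length w \<le> n \<and>
      (\<forall>i. occurs_at w s i \<longleftrightarrow> i = n - length w)}"

definition H_w :: "'a set \<Rightarrow> 'a list \<Rightarrow> nat \<Rightarrow> int" where
  "H_w \<Omega> w n = int (card \<Omega>) * int (h_w \<Omega> w (n - 1)) - int (h_w \<Omega> w n)"

end

theory Submission imports Defs begin

lemma occ_nth: "occurs_at w s i \<Longrightarrow> x < length w \<Longrightarrow> s ! (i + x) = w ! x"
proof -
  assume a: "occurs_at w s i" "x < length w"
  then have "take (length w) (drop i s) = w" "i + length w \<le> length s" by (auto simp: occurs_at_def)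
  then have "w ! x = (take (length w) (drop i s)) ! x" by simp
  also have "\<dots> = s ! (i + x)" using a(2) \<open>i + length w \<le> length s\<close> by simp
  finally show ?thesis by simp
qed

lemma occ_append: "occurs_at w (xs @ ys) (length xs + j) \<longleftrightarrow> occurs_at w ys j"
  by (simp add: occurs_at_def)

lemma occ_Cons: "occurs_at w (x # ys) (Suc j) \<longleftrightarrow> occurs_at w ys j"
  using occ_append[of w "[x]" ys j] by simp

lemma orbit:
  fixes F :: "nat \<Rightarrow> 'a" and i r d :: nat
  assumes ip: "i > 0"
    and per: "\<And>x. F x = F (x mod i)"
    and sh: "\<And>x. x mod i \<noteq> r mod i \<Longrightarrow> F x = F (x + d)"
  shows "F r = F (r + d)"
proof -
  have "\<forall>t. t \<ge> 1 \<longrightarrow> F (r + d) = F (r + t * d) \<or> F (r + d) = F r"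
  proof (intro allI impI)
    fix t :: nat assume "t \<ge> 1"
    then show "F (r + d) = F (r + t * d) \<or> F (r + d) = F r"
    proof (induction t rule: dec_induct)
      case base then show ?case by simp
    next
      case (step t)
      show ?case
      proof (cases "(r + t * d) mod i = r mod i")
        case True
        then have "F (r + t*d) = F r" using per by metis
        then show ?thesis using step.IH by auto
      next
        case False
        then have "F (r + t*d) = F (r + t*d + d)" using sh by blast
        then show ?thesis using step.IH by (auto simp: algebra_simps)
      qed
    qed
  qed
  then have "F (r + d) = F (r + i * d) \<or> F (r + d) = F r" using ip by auto
  moreover have "(r + i * d) mod i = r mod i" by simp
  then have "F (r + i * d) = F r" using per by metis
  ultimately show ?thesis by auto
qed

lemma key_lt:
  fixes w p :: "'a list" and c c' :: 'a
  assumes X: "occurs_at w (w @ [c] @ p) i" and Y: "occurs_at w (w @ [c'] @ p) j"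
    and i1: "1 \<le> i" and ij: "i < j" and jk: "j \<le> length w"
  shows "c = c'"
proof -
  define k where "k = length w"
  define r where "r = k - j"
  define d where "d = j - i"
  have nX: "(w @ [c] @ p) ! z = (if z < k then w ! z else if z = k then c else p ! (z - k - 1))" for z
    by (auto simp: k_def nth_append)
  have nY: "(w @ [c'] @ p) ! z = (if z < k then w ! z else if z = k then c' else p ! (z - k - 1))" for z
    by (auto simp: k_def nth_append)
  have Xn: "x < k \<Longrightarrow> (w @ [c] @ p) ! (i + x) = w ! x" for x using occ_nth[OF X] k_def by simp
  have Yn: "x < k \<Longrightarrow> (w @ [c'] @ p) ! (j + x) = w ! x" for x using occ_nth[OF Y] k_def by simp
  have peri: "i + x < k \<Longrightarrow> w ! (i + x) = w ! x" for x using Xn[of x] nX[of "i+x"] by auto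
  have cc: "c = w ! (k - i)" using Xn[of "k-i"] nX[of k] i1 ij jk k_def by (auto)
  have cc': "c' = w ! (k - j)" using Yn[of "k-j"] nY[of k] i1 ij jk k_def by auto
  have pX: "y + 2 \<le> i \<Longrightarrow> p ! y = w ! (k - i + 1 + y)" for y
    using Xn[of "k - i + 1 + y"] nX[of "i + (k - i + 1 + y)"] i1 ij jk k_def by auto
  have pY: "y + 2 \<le> j \<Longrightarrow> p ! y = w ! (k - j + 1 + y)" for y
    using Yn[of "k - j + 1 + y"] nY[of "j + (k - j + 1 + y)"] i1 ij jk k_def by auto
  have D: "y + 2 \<le> i \<Longrightarrow> w ! (r + 1 + y) = w ! (r + d + 1 + y)" for y
  proof -
    assume y: "y + 2 \<le> i"
    have e: "r + d + 1 + y = k - i + 1 + y" using ij jk k_def unfolding r_def d_def by simp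
    have "w ! (r + 1 + y) = p ! y" using pY[of y] y ij by (simp add: r_def)
    then show ?thesis using pX[OF y] e by simp
  qed
  define F where "F x = w ! (x mod i)" for x
  have ip: "i > 0" using i1 by simp
  have ik: "i < k" using ij jk k_def by simp
  have Fw: "x < k \<Longrightarrow> F x = w ! x" for x
  proof (induction x rule: less_induct)
    case (less x)
    show ?case
    proof (cases "x < i")
      case True then show ?thesis by (simp add: F_def)
    next
      case False
      then have "F (x - i) = w ! (x - i)" using less ip by auto
      moreover have "F x = F (x - i)" using False by (simp add: F_def le_mod_geq)
      moreover have "w ! x = w ! (x - i)" using peri[of "x - i"] False less.prems by simp
      ultimately show ?thesis by simp
    qed
  qed
  have per: "F x = F (x mod i)" for x by (simp add: F_def)
  have sh: "F x = F (x + d)" if ne: "x mod i \<noteq> r mod i" for x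
  proof -
    define y where "y = r + ((x mod i + i - r mod i) mod i)"
    have ym: "y mod i = x mod i"
    proof -
      have "y mod i = (r mod i + (x mod i + i - r mod i) mod i) mod i" by (simp add: y_def mod_add_left_eq)
      also have "\<dots> = (r mod i + (x mod i + i - r mod i)) mod i" by (simp add: mod_add_right_eq)
      also have "r mod i + (x mod i + i - r mod i) = x mod i + i" using ip
        by (metis add.commute le_add2 le_add_diff_inverse less_imp_le_nat mod_less_divisor trans_le_add2 add_le_mono le_refl)
      finally show ?thesis by simp
    qed
    have "(x mod i + i - r mod i) mod i \<noteq> 0"
    proof
      assume "(x mod i + i - r mod i) mod i = 0"
      then have "y = r" by (simp add: y_def)
      then show False using ym ne by simp
    qed
    moreover have "(x mod i + i - r mod i) mod i < i" using ip by simp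
    ultimately obtain z where z: "y = r + 1 + z" "z + 2 \<le> i" unfolding y_def
      by (metis Suc_le_eq add_Suc_right add_2_eq_Suc' add.commute less_Suc_eq_0_disj not0_implies_Suc add_Suc plus_1_eq_Suc)
    have rk: "r + d + i = k" using ij jk k_def unfolding r_def d_def by simp
    have "F y = w ! y" using Fw z rk by simp
    moreover have "F (y + d) = w ! (y + d)" using Fw z rk by simp
    moreover have "w ! y = w ! (y + d)" using D[OF z(2)] z by (simp add: algebra_simps)
    moreover have "F x = F y" using ym by (simp add: F_def)
    moreover have "F (x + d) = F (y + d)" unfolding F_def by (metis ym mod_add_left_eq)
    ultimately show ?thesis by simp
  qed
  have "F r = F (r + d)" using orbit[of i F r d] ip per sh by blast
  moreover have "F r = w ! r" using Fw ij jk k_def i1 unfolding r_def by simp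
  moreover have "F (r + d) = w ! (r + d)" using Fw ij jk k_def i1 unfolding r_def d_def by simp
  moreover have "r + d = k - i" using ij jk unfolding r_def d_def k_def by simp
  ultimately show ?thesis using cc cc' r_def by simp
qed


lemma key:
  assumes X: "occurs_at w (w @ [c] @ p) i" and Y: "occurs_at w (w @ [c'] @ p) j"
    and "1 \<le> i" "i \<le> length w" "1 \<le> j" "j \<le> length w"
  shows "c = c'"
proof -
  consider "i < j" | "j < i" | "i = j" by arith
  then show ?thesis
  proof cases
    case 1 then show ?thesis using key_lt[OF X Y] assms by simp
  next
    case 2 then show ?thesis using key_lt[OF Y X] assms by simp
  next
    case 3
    have "(w @ [c] @ p) ! (i + (length w - i)) = w ! (length w - i)"
      using occ_nth[OF X, of "length w - i"] assms by simp
    moreover have "(w @ [c'] @ p) ! (j + (length w - j)) = w ! (length w - j)"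
      using occ_nth[OF Y, of "length w - j"] assms by simp
    ultimately show ?thesis using 3 assms by (simp add: nth_append)
  qed
qed

theorem corollary4p2:
  fixes \<Omega> :: "'a set" and w :: "'a list" and k n :: nat
  assumes "finite \<Omega>" and "card \<Omega> \<ge> 2"
    and "set w \<subseteq> \<Omega>" and "length w = k"
    and "n > k + 1"
  shows "H_w \<Omega> w n \<ge> (int (card \<Omega>) - 1) * int (h_w \<Omega> w (n - k - 1))"
proof -
  note fin = assms(1) and wO = assms(3) and kw = assms(4) and nk = assms(5)
  define A where "A N = {s. s \<in> lists \<Omega> \<and> length s = N \<and> length w \<le> N \<and>
      (\<forall>i. occurs_at w s i \<longleftrightarrow> i = N - length w)}" for N
  have hA: "h_w \<Omega> w N = card (A N)" for N by (simp add: h_w_def A_def)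
  have finA: "finite (A N)" for N
    by (rule finite_subset[OF _ finite_lists_length_eq[OF fin, of N]]) (auto simp: A_def)
  define q where "q = card \<Omega>"
  show ?thesis
  proof (cases "k = 0")
    case True
    then have w0: "w = []" using kw by simp
    have "A N = {}" if "N \<ge> 1" for N
    proof -
      show ?thesis unfolding A_def using \<open>N \<ge> 1\<close> w0 by (auto simp: occurs_at_def) (rule exI[of _ 0], auto)
    qed
    then have "h_w \<Omega> w (n - 1) = 0" "h_w \<Omega> w n = 0" using nk True by (auto simp: hA)
    then show ?thesis using True by (simp add: H_w_def)
  next
    case False
    then have k1: "k \<ge> 1" by simp
    define m where "m = n - k - 1"
    define B where "B = (\<lambda>(c, s). c # s) ` (\<Omega> \<times> A (n - 1))"
    have cardB: "card B = q * card (A (n - 1))"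
    proof -
      have "inj_on (\<lambda>(c, s). c # s) (\<Omega> \<times> A (n - 1))" by (auto simp: inj_on_def)
      then show ?thesis unfolding B_def q_def by (simp add: card_image card_cartesian_product)
    qed
    have finB: "finite B" unfolding B_def using fin finA by simp
    have subB: "A n \<subseteq> B"
    proof
      fix t assume t: "t \<in> A n"
      then have "length t = n" by (simp add: A_def)
      then obtain x s where ts: "t = x # s" using nk by (cases t) auto
      have "x \<in> \<Omega>" "s \<in> lists \<Omega>" using t ts by (auto simp: A_def)
      moreover have "length s = n - 1" using t ts by (auto simp: A_def)
      moreover have "occurs_at w s i \<longleftrightarrow> i = n - 1 - length w" for i
      proof -
        have "occurs_at w s i \<longleftrightarrow> occurs_at w t (Suc i)" using ts occ_Cons[of w x s i] by simp
        also have "\<dots> \<longleftrightarrow> Suc i = n - length w" using t by (simp add: A_def)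
        also have "\<dots> \<longleftrightarrow> i = n - 1 - length w" using nk kw by auto
        finally show ?thesis .
      qed
      ultimately have "s \<in> A (n - 1)" using nk kw by (simp add: A_def)
      then show "t \<in> B" unfolding B_def using ts \<open>x \<in> \<Omega>\<close> by auto
    qed
    define G where "G u = {c \<in> \<Omega>. \<forall>i. 1 \<le> i \<and> i \<le> k \<longrightarrow> \<not> occurs_at w (w @ [c] @ u) i}" for u
    define S where "S = (SIGMA u : A m. G u)"
    define f where "f = (\<lambda>(u, c). w @ [c] @ u)"
    have finS: "finite S" unfolding S_def G_def using finA fin by auto
    have injf: "inj_on f S" by (auto simp: inj_on_def f_def)
    have fS: "f ` S \<subseteq> B - A n"
    proof
      fix t assume "t \<in> f ` S"
      then obtain u c where uc: "u \<in> A m" "c \<in> G u" and tdef: "t = w @ [c] @ u"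
        by (auto simp: S_def f_def)
      have lu: "length u = m" "k \<le> m" and uO: "u \<in> lists \<Omega>"
        and uocc: "\<And>i. occurs_at w u i \<longleftrightarrow> i = m - k" using uc kw by (auto simp: A_def)
      have cO: "c \<in> \<Omega>" and cG: "\<And>i. 1 \<le> i \<Longrightarrow> i \<le> k \<Longrightarrow> \<not> occurs_at w t i"
        using uc tdef by (auto simp: G_def)
      have occT: "occurs_at w t j \<longleftrightarrow> j = 0 \<or> j = n - k" for j
      proof -
        consider "j = 0" | "1 \<le> j \<and> j \<le> k" | "j > k" by arith
        then show ?thesis
        proof cases
          case 1 then show ?thesis using tdef by (simp add: occurs_at_def)
        next
          case 2
          have "k < n - k" using lu(2) m_def nk by linarith
          then show ?thesis using cG[of j] 2 by auto
        next
          case 3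
          have e: "length (w @ [c]) + (j - k - 1) = j" using 3 kw by simp
          have "occurs_at w t j \<longleftrightarrow> occurs_at w (w @ [c] @ u) (length (w @ [c]) + (j - k - 1))"
            unfolding e tdef ..
          also have "\<dots> \<longleftrightarrow> occurs_at w u (j - k - 1)" using occ_append[of w "w @ [c]" u "j - k - 1"] by simp
          also have "\<dots> \<longleftrightarrow> j - k - 1 = m - k" by (rule uocc)
          also have "\<dots> \<longleftrightarrow> j = n - k" using 3 lu(2) m_def nk by linarith
          finally show ?thesis using 3 by simp
        qed
      qed
      have wne: "w \<noteq> []" using k1 kw by auto
      define s where "s = tl w @ [c] @ u"
      have "w @ [c] @ u = hd w # (tl w @ [c] @ u)" using wne by (cases w) auto
      then have ts: "t = hd w # s" using tdef s_def by simp
      have stl: "set (tl w) \<subseteq> \<Omega>" using wO by (cases w) auto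
      have "hd w \<in> \<Omega>" using wne wO by (cases w) auto
      moreover have "s \<in> A (n - 1)"
      proof -
        have "s \<in> lists \<Omega>" using stl cO uO s_def by auto
        moreover have "length s = n - 1" using s_def lu kw m_def nk k1 by simp
        moreover have "occurs_at w s i \<longleftrightarrow> i = n - 1 - k" for i
          using occ_Cons[of w "hd w" s i] ts occT[of "Suc i"] nk by auto
        ultimately show ?thesis using nk kw by (simp add: A_def)
      qed
      ultimately have "t \<in> B" unfolding B_def using ts by auto
      moreover have "t \<notin> A n"
      proof
        assume "t \<in> A n"
        then have "occurs_at w t 0 \<longleftrightarrow> 0 = n - length w" by (simp add: A_def)
        then show False using occT[of 0] nk kw by simp
      qed
      ultimately show "t \<in> B - A n" by simp
    qed
    have Gbig: "card (G u) \<ge> q - 1" for u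
    proof (cases "G u = \<Omega>")
      case True then show ?thesis by (simp add: q_def)
    next
      case False
      then obtain b where b: "b \<in> \<Omega>" "b \<notin> G u" unfolding G_def by auto
      then obtain i where i: "1 \<le> i" "i \<le> k" "occurs_at w (w @ [b] @ u) i" by (auto simp: G_def)
      have "\<Omega> - {b} \<subseteq> G u"
      proof
        fix c assume c: "c \<in> \<Omega> - {b}"
        show "c \<in> G u"
        proof (rule ccontr)
          assume "c \<notin> G u"
          then obtain j where "1 \<le> j" "j \<le> k" "occurs_at w (w @ [c] @ u) j" using c by (auto simp: G_def)
          then have "c = b" using key[OF _ i(3)] i kw by blast
          then show False using c by simp
        qed
      qed
      moreover have "finite (G u)" using fin by (auto simp: G_def)
      ultimately have "card (\<Omega> - {b}) \<le> card (G u)" by (rule card_mono[rotated])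
      then show ?thesis using b fin by (simp add: q_def)
    qed
    have "card S = (\<Sum>u\<in>A m. card (G u))" unfolding S_def
      using finA fin by (simp add: G_def)
    also have "\<dots> \<ge> (\<Sum>u\<in>A m. q - 1)" by (rule sum_mono) (rule Gbig)
    finally have cS: "card S \<ge> (q - 1) * card (A m)" by (simp add: mult.commute)
    have "card S = card (f ` S)" using injf by (simp add: card_image)
    also have "\<dots> \<le> card (B - A n)" using fS finB by (intro card_mono) auto
    also have "\<dots> = card B - card (A n)" using subB finB by (simp add: card_Diff_subset finite_subset)
    finally have main: "(q - 1) * card (A m) \<le> card B - card (A n)" by (rule le_trans[OF cS])
    have le: "card (A n) \<le> card B" using subB finB by (simp add: card_mono)
    have q2: "q \<ge> 1" using assms(2) q_def by simp
    have "(int q - 1) * int (card (A m)) = int ((q - 1) * card (A m))" using q2 by (simp add: of_nat_diff)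
    also have "\<dots> \<le> int (card B - card (A n))" using main by (rule of_nat_mono)
    also have "\<dots> = int q * int (card (A (n - 1))) - int (card (A n))" using le unfolding cardB by (simp add: of_nat_diff)
    finally have fin2: "(int q - 1) * int (card (A m)) \<le> int q * int (card (A (n - 1))) - int (card (A n))" .
    have "H_w \<Omega> w n = int q * int (card (A (n - 1))) - int (card (A n))"
      unfolding H_w_def hA q_def ..
    moreover have "h_w \<Omega> w (n - k - 1) = card (A m)" unfolding hA m_def ..
    ultimately show ?thesis using fin2 q_def by simp
  qed
qed

end
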